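(* Assume $x_j(0)<\tau$ and $y_j(0)=0$ for all individuals $j$. Then the system is in the no action state if and only if $\sigma_A\max_j\alpha_j-\sigma_S\mu_S\le 0$, i.e. the individual with the largest $\alpha$ satisfies $\sigma_A\alpha_i-\sigma_S\mu_S\le 0$.
   Context: Model: Fix an integer $n\ge 2$ (number of individuals) and parameters $\sigma_A,\sigma_S\ge 0$, $\sigma_C>0$, $\mu_S\in[0,1]$, $\mu_C>0$, $r>0$, $\tau\in(0,1)$, $\alpha_1,\dots,\alpha_n\in(-1,1)$. Individual $i$ has state $(x_i(t),y_i(t))$, $x_i\in(-1,1)$, $y_i\in[0,1]$, and $\gamma_i(t)=\frac{1}{n-1}\sum_{j\neq i}y_j(t)$. Between action events the state evolves by $\dot x_i=[\sigma_A\alpha_i+\sigma_S(\gamma_i-\mu_S)]\,\sigma_C(\gamma_i+\mu_C)(1-x_i)(1+x_i)$, $\dot y_i=-ry_i$. Individual $i$ "acts" at a time $t$ when $x_i(t)$ reaches the threshold $\tau$ (i.e. $x_i(t)\ge\tau$); immediately afterwards $x_i$ is reset to $0$ and $y_i$ is reset to $1$, and the continuous evolution resumes from the new state. The system is in the "no action state" if no individual ever acts. *)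

theory Defs
  imports "HOL-Analysis.Analysis"
begin

definition gam :: "nat \<Rightarrow> (nat \<Rightarrow> real \<Rightarrow> real) \<Rightarrow> nat \<Rightarrow> real \<Rightarrow> real" where
  "gam n y i t = (\<Sum>j\<in>{..<n} - {i}. y j t) / (real n - 1)"

definition flow_trajectory ::
  "nat \<Rightarrow> real \<Rightarrow> real \<Rightarrow> real \<Rightarrow> real \<Rightarrow> real \<Rightarrow> real \<Rightarrow> (nat \<Rightarrow> real)
   \<Rightarrow> (nat \<Rightarrow> real) \<Rightarrow> (nat \<Rightarrow> real)
   \<Rightarrow> (nat \<Rightarrow> real \<Rightarrow> real) \<Rightarrow> (nat \<Rightarrow> real \<Rightarrow> real) \<Rightarrow> bool" where
  "flow_trajectory n \<sigma>A \<sigma>S \<sigma>C \<mu>S \<mu>C r \<alpha> x0 y0 x y \<longleftrightarrow>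
     (\<forall>i<n. x i 0 = x0 i \<and> y i 0 = y0 i \<and>
       (\<forall>t\<ge>0.
          (x i has_real_derivative
             ((\<sigma>A * \<alpha> i + \<sigma>S * (gam n y i t - \<mu>S)) * \<sigma>C * (gam n y i t + \<mu>C)
               * (1 - x i t) * (1 + x i t))) (at t within {0..}) \<and>
          (y i has_real_derivative (- r * y i t)) (at t within {0..})))"

text \<open>Before any action the system follows
  the continuous flow, so no individual ever acts iff the flow trajectory from the
  initial state exists for all times t >= 0 and never reaches the threshold tau.\<close>
definition no_action_state ::
  "nat \<Rightarrow> real \<Rightarrow> real \<Rightarrow> real \<Rightarrow> real \<Rightarrow> real \<Rightarrow> real \<Rightarrow> real \<Rightarrow> (nat \<Rightarrow> real)
   \<Rightarrow> (nat \<Rightarrow> real) \<Rightarrow> (nat \<Rightarrow> real) \<Rightarrow> bool" where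
  "no_action_state n \<sigma>A \<sigma>S \<sigma>C \<mu>S \<mu>C r \<tau> \<alpha> x0 y0 \<longleftrightarrow>
     (\<exists>x y. flow_trajectory n \<sigma>A \<sigma>S \<sigma>C \<mu>S \<mu>C r \<alpha> x0 y0 x y \<and>
            (\<forall>i<n. \<forall>t\<ge>0. x i t < \<tau>))"

end

theory Submission
  imports Defs
begin

lemma tanh_artanh_real: assumes "-1 < (x::real)" "x < 1" shows "tanh (artanh x) = x"
proof -
  have e: "exp (-2 * artanh x) = (1-x)/(1+x)"
  proof -
    have "-2 * artanh x = ln (1-x) - ln (1+x)" using assms by (simp add: artanh_def ln_div)
    then show ?thesis using assms by (simp add: exp_diff)
  qed
  show ?thesis unfolding tanh_real_altdef e using assms by (simp add: field_simps)
qed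

lemma zero_const:
  assumes "\<And>t. t \<ge> 0 \<Longrightarrow> (f has_real_derivative 0) (at t within {0..})"
  shows "\<forall>t\<ge>0. f t = f (0::real)"
proof -
  obtain c where "\<forall>t\<in>{0..}. f t = c"
    using has_field_derivative_zero_constant[of "{0::real..}" f] assms by auto
  then show ?thesis by auto
qed

lemma y_zero:
  assumes "\<And>t. t \<ge> 0 \<Longrightarrow> (y has_real_derivative (- r * y t)) (at t within {0..})" "y 0 = 0"
  shows "\<forall>t\<ge>0. y t = (0::real)"
proof -
  have "\<forall>t\<ge>0. (\<lambda>t. y t * exp (r*t)) t = (\<lambda>t. y t * exp (r*t)) 0"
  proof (rule zero_const)
    fix t :: real assume "t \<ge> 0"
    show "((\<lambda>t. y t * exp (r*t)) has_real_derivative 0) (at t within {0..})"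
      using assms(1)[OF \<open>t\<ge>0\<close>]
      by (auto intro!: derivative_eq_intros simp: algebra_simps)
  qed
  then show ?thesis using assms(2) by simp
qed

lemma x_blowup:
  assumes "\<And>t. t \<ge> 0 \<Longrightarrow> (x has_real_derivative (c * (1 - x t) * (1 + x t))) (at t within {0..})"
    and "c > 0" "-1 < x 0" "\<forall>t\<ge>0. x t < \<tau>" "\<tau> < (1::real)"
  shows False
proof -
  have lt: "1 - x t > 0" if "t \<ge> 0" for t using assms(4,5) that by force
  have "\<forall>t\<ge>0. (\<lambda>t. (1 + x t) / (1 - x t) * exp (-2*c*t)) t = (\<lambda>t. (1 + x t) / (1 - x t) * exp (-2*c*t)) 0"
  proof (rule zero_const)
    fix t :: real assume t: "t \<ge> 0"
    have ne: "1 - x t \<noteq> 0" using lt[OF t] by simp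
    show "((\<lambda>t. (1 + x t) / (1 - x t) * exp (-2*c*t)) has_real_derivative 0) (at t within {0..})"
      using assms(1)[OF t] ne
      apply -
      apply (rule derivative_eq_intros | assumption | simp)+
      apply (subgoal_tac "1 + x t * x t - x t * 2 \<noteq> 0")
       apply (simp add: divide_simps)
       apply (simp add: algebra_simps)
      apply (subgoal_tac "1 + x t * x t - x t * 2 = (1 - x t)^2")
       apply simp
      apply (simp add: power2_eq_square algebra_simps)
      done
  qed
  note h = this
  have eq: "(1 + x t) / (1 - x t) = (1 + x 0)/(1 - x 0) * exp (2*c*t)" if "t \<ge> 0" for t
  proof -
    from h that have "(1 + x t) / (1 - x t) * exp (-2*c*t) = (1 + x 0)/(1 - x 0)" by simp
    then have "(1 + x t) / (1 - x t) * exp (-2*c*t) * exp (2*c*t) = (1 + x 0)/(1 - x 0) * exp (2*c*t)" by simp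
    moreover have "exp (-2*c*t) * exp (2*c*t) = 1" by (simp add: exp_minus_inverse[symmetric] exp_add[symmetric])
    ultimately show ?thesis by (simp add: mult.assoc)
  qed
  define K where "K = (1 + x 0)/(1 - x 0)"
  have K: "K > 0" using assms(3) lt[of 0] by (simp add: K_def)
  define M where "M = 2 / (1 - \<tau>)"
  have M: "M > 0" using assms(5) by (simp add: M_def)
  define t where "t = \<bar>ln (M / K)\<bar> / (2*c) + 1"
  have "exp (2*c*t) > M / K"
  proof -
    have "2*c*t = \<bar>ln (M/K)\<bar> + 2*c" using assms(2) by (simp add: t_def field_simps)
    then have "2*c*t > ln (M/K)" using assms(2) by linarith
    then have "exp (2*c*t) > exp (ln (M/K))" by simp
    then show ?thesis using M K by simp
  qed
  then have big: "K * exp (2*c*t) > M" using K by (simp add: field_simps)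
  have tpos: "t \<ge> 0" using assms(2) by (simp add: t_def)
  have "(1 + x t) / (1 - x t) \<le> 2 / (1 - \<tau>)"
  proof -
    have "1 + x t \<le> 2" using assms(4,5) tpos by force
    moreover have "1 - x t \<ge> 1 - \<tau>" using assms(4) tpos by force
    ultimately show ?thesis using lt[OF tpos] assms(5)
      by (smt (verit) frac_le)
  qed
  then show False using eq[OF tpos] big unfolding K_def M_def by simp
qed
theorem corollary4:
  fixes n :: nat and \<sigma>A \<sigma>S \<sigma>C \<mu>S \<mu>C r \<tau> :: real
    and \<alpha> x0 y0 :: "nat \<Rightarrow> real"
  assumes "n \<ge> 2"
    and "\<sigma>A \<ge> 0" and "\<sigma>S \<ge> 0" and "\<sigma>C > 0"
    and "0 \<le> \<mu>S" and "\<mu>S \<le> 1" and "\<mu>C > 0" and "r > 0"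
    and "0 < \<tau>" and "\<tau> < 1"
    and "\<forall>j<n. -1 < \<alpha> j \<and> \<alpha> j < 1"
    and "\<forall>j<n. -1 < x0 j \<and> x0 j < 1"
    and "\<forall>j<n. x0 j < \<tau>"
    and "\<forall>j<n. y0 j = 0"
  shows "no_action_state n \<sigma>A \<sigma>S \<sigma>C \<mu>S \<mu>C r \<tau> \<alpha> x0 y0 \<longleftrightarrow>
         \<sigma>A * Max (\<alpha> ` {..<n}) - \<sigma>S * \<mu>S \<le> 0"
proof
  assume "no_action_state n \<sigma>A \<sigma>S \<sigma>C \<mu>S \<mu>C r \<tau> \<alpha> x0 y0"
  then obtain x y where tr: "flow_trajectory n \<sigma>A \<sigma>S \<sigma>C \<mu>S \<mu>C r \<alpha> x0 y0 x y"
    and lt: "\<forall>i<n. \<forall>t\<ge>0. x i t < \<tau>" unfolding no_action_state_def by blast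
  show "\<sigma>A * Max (\<alpha> ` {..<n}) - \<sigma>S * \<mu>S \<le> 0"
  proof (rule ccontr)
    assume neg: "\<not> ?thesis"
    have ne: "\<alpha> ` {..<n} \<noteq> {}" using assms(1) by (simp add: lessThan_empty_iff)
    obtain i where i: "i < n" "\<alpha> i = Max (\<alpha> ` {..<n})"
      using Max_in[OF _ ne] by auto
    have y0: "\<forall>t\<ge>0. y j t = 0" if "j < n" for j
      using tr that assms(14) unfolding flow_trajectory_def
      by (intro y_zero[of "y j" r]) auto
    have g0: "gam n y i t = 0" if "t \<ge> 0" for t
      unfolding gam_def using y0 that by simp
    define c where "c = (\<sigma>A * \<alpha> i - \<sigma>S * \<mu>S) * \<sigma>C * \<mu>C"
    have cpos: "c > 0" using neg i assms(4,7) by (simp add: c_def)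
    show False
    proof (rule x_blowup[of "x i" c \<tau>])
      fix t :: real assume t: "t \<ge> 0"
      have "(x i has_real_derivative
             ((\<sigma>A * \<alpha> i + \<sigma>S * (gam n y i t - \<mu>S)) * \<sigma>C * (gam n y i t + \<mu>C)
               * (1 - x i t) * (1 + x i t))) (at t within {0..})"
        using tr i t unfolding flow_trajectory_def by blast
      then show "(x i has_real_derivative (c * (1 - x i t) * (1 + x i t))) (at t within {0..})"
        using g0[OF t] by (simp add: c_def algebra_simps)
    next
      show "-1 < x i 0" using tr i assms(12) unfolding flow_trajectory_def by auto
    qed (use cpos lt i assms(10) in auto)
  qed
next
  assume H: "\<sigma>A * Max (\<alpha> ` {..<n}) - \<sigma>S * \<mu>S \<le> 0"
  define c where "c i = (\<sigma>A * \<alpha> i - \<sigma>S * \<mu>S) * \<sigma>C * \<mu>C" for i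
  have cneg: "c i \<le> 0" if "i < n" for i
  proof -
    have "\<alpha> i \<le> Max (\<alpha> ` {..<n})" using that by auto
    then have "\<sigma>A * \<alpha> i \<le> \<sigma>A * Max (\<alpha> ` {..<n})" using assms(2) by (rule mult_left_mono)
    then have "\<sigma>A * \<alpha> i - \<sigma>S * \<mu>S \<le> 0" using H by linarith
    then show ?thesis using assms(4,7) unfolding c_def
      by (simp add: mult_nonpos_nonneg)
  qed
  define x where "x i t = tanh (c i * t + artanh (x0 i))" for i t
  define y :: "nat \<Rightarrow> real \<Rightarrow> real" where "y i t = 0" for i t
  have g: "gam n y i t = 0" for i t unfolding gam_def y_def by simp
  have "flow_trajectory n \<sigma>A \<sigma>S \<sigma>C \<mu>S \<mu>C r \<alpha> x0 y0 x y"
    unfolding flow_trajectory_def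
  proof (intro allI impI conjI)
    fix i assume i: "i < n"
    show "x i 0 = x0 i" using assms(12) i by (simp add: x_def tanh_artanh_real)
    show "y i 0 = y0 i" using assms(14) i by (simp add: y_def)
    fix t :: real assume t: "t \<ge> 0"
    show "(y i has_real_derivative (- r * y i t)) (at t within {0..})" unfolding y_def by simp
    have d: "((\<lambda>t. tanh (c i * t + artanh (x0 i))) has_real_derivative
        (1 - tanh (c i * t + artanh (x0 i)) ^ 2) * (c i * 1 + 0)) (at t)"
      by (intro derivative_intros) auto
    have e: "(1 - tanh (c i * t + artanh (x0 i)) ^ 2) * (c i * 1 + 0)
       = (\<sigma>A * \<alpha> i + \<sigma>S * (gam n y i t - \<mu>S)) * \<sigma>C * (gam n y i t + \<mu>C)
               * (1 - x i t) * (1 + x i t)"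
      unfolding g x_def c_def by (simp add: power2_eq_square algebra_simps)
    show "(x i has_real_derivative
             ((\<sigma>A * \<alpha> i + \<sigma>S * (gam n y i t - \<mu>S)) * \<sigma>C * (gam n y i t + \<mu>C)
               * (1 - x i t) * (1 + x i t))) (at t within {0..})"
      using has_field_derivative_at_within[OF d[unfolded e]] unfolding x_def[abs_def] by simp
  qed
  moreover have "\<forall>i<n. \<forall>t\<ge>0. x i t < \<tau>"
  proof (intro allI impI)
    fix i :: nat and t :: real assume i: "i < n" and t: "t \<ge> 0"
    have "c i * t \<le> 0" using cneg[OF i] t by (simp add: mult_nonpos_nonneg)
    then have "x i t \<le> tanh (artanh (x0 i))" unfolding x_def by simp
    also have "\<dots> = x0 i" using assms(12) i by (simp add: tanh_artanh_real)
    finally show "x i t < \<tau>" using assms(13) i by force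
  qed
  ultimately show "no_action_state n \<sigma>A \<sigma>S \<sigma>C \<mu>S \<mu>C r \<tau> \<alpha> x0 y0"
    unfolding no_action_state_def by blast
qed

end
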